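(* Let $M$ be a $2$-torsion free $k$-algebra. Let $E$ be the set of idempotent anti-pre-endomorphisms of $M$, i.e. $k$-linear maps $e\colon M\to M$ with $e\circ e=e$ that are anti-pre-morphisms, and let $P$ be the set of pairs $(K,B)$ of $k$-submodules of $M$ such that $M=K\oplus B$ as $k$-modules, $xy-yx\in K$ for all $x,y\in M$, and $bb'=b'b$ for all $b,b'\in B$. Then $e\mapsto(\ker(e),e(M))$ is a bijection $E\to P$ (with inverse sending $(K,B)$ to the projection of $M=K\oplus B$ onto $B$ along $K$, viewed as an endomorphism of $M$).
   Context: $k$ is a commutative ring with identity; a $k$-algebra is a $k$-module with a $k$-bilinear, not necessarily associative, product. $M$ is $2$-torsion free if $x+x=0$ implies $x=0$. A $k$-linear map $\varphi$ is an anti-pre-morphism if $\varphi(xy)+\varphi(x)\varphi(y)=\varphi(yx)+\varphi(y)\varphi(x)$ for all $x,y$. *)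

theory Defs
  imports Main "HOL.Modules"
begin

definition k_algebra :: "('k::comm_ring_1 \<Rightarrow> 'm::ab_group_add \<Rightarrow> 'm) \<Rightarrow> ('m \<Rightarrow> 'm \<Rightarrow> 'm) \<Rightarrow> bool" where
  "k_algebra scale mult \<longleftrightarrow> Modules.module scale \<and>
     (\<forall>x y z. mult (x + y) z = mult x z + mult y z) \<and>
     (\<forall>x y z. mult x (y + z) = mult x y + mult x z) \<and>
     (\<forall>a x y. mult (scale a x) y = scale a (mult x y)) \<and>
     (\<forall>a x y. mult x (scale a y) = scale a (mult x y))"

definition two_torsion_free :: "'m::ab_group_add itself \<Rightarrow> bool" where
  "two_torsion_free _ \<longleftrightarrow> (\<forall>x::'m. x + x = 0 \<longrightarrow> x = 0)"

definition anti_pre_morphism :: "('m \<Rightarrow> 'm \<Rightarrow> 'm::ab_group_add) \<Rightarrow> ('m \<Rightarrow> 'm) \<Rightarrow> bool" where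
  "anti_pre_morphism mult \<phi> \<longleftrightarrow>
     (\<forall>x y. \<phi> (mult x y) + mult (\<phi> x) (\<phi> y) = \<phi> (mult y x) + mult (\<phi> y) (\<phi> x))"

definition idem_anti_pre_endos ::
  "('k::comm_ring_1 \<Rightarrow> 'm::ab_group_add \<Rightarrow> 'm) \<Rightarrow> ('m \<Rightarrow> 'm \<Rightarrow> 'm) \<Rightarrow> ('m \<Rightarrow> 'm) set" where
  "idem_anti_pre_endos scale mult =
     {e. Modules.module_hom scale scale e \<and> e \<circ> e = e \<and> anti_pre_morphism mult e}"

definition ker :: "('m \<Rightarrow> 'm::zero) \<Rightarrow> 'm set" where
  "ker e = {x. e x = 0}"

definition comm_split_pairs ::
  "('k::comm_ring_1 \<Rightarrow> 'm::ab_group_add \<Rightarrow> 'm) \<Rightarrow> ('m \<Rightarrow> 'm \<Rightarrow> 'm) \<Rightarrow> ('m set \<times> 'm set) set" where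
  "comm_split_pairs scale mult =
     {(K, B). Modules.module.subspace scale K \<and> Modules.module.subspace scale B \<and>
        K \<inter> B = {0} \<and> (\<forall>x. \<exists>a\<in>K. \<exists>b\<in>B. x = a + b) \<and>
        (\<forall>x y. mult x y - mult y x \<in> K) \<and>
        (\<forall>b\<in>B. \<forall>b'\<in>B. mult b b' = mult b' b)}"

definition proj_along :: "'m::ab_group_add set \<Rightarrow> 'm set \<Rightarrow> 'm \<Rightarrow> 'm" where
  "proj_along K B x = (THE b. b \<in> B \<and> x - b \<in> K)"

end

theory Submission
  imports Defs
begin

lemma proj_unique:
  assumes m: "module scale" and sK: "module.subspace scale K" and sB: "module.subspace scale B"
    and I: "K \<inter> B = {0}" and b1: "b1 \<in> B" "x - b1 \<in> K" and b2: "b2 \<in> B" "x - b2 \<in> K"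
  shows "b1 = b2"
proof -
  interpret module scale by fact
  have "b1 - b2 \<in> B" using subspace_diff[OF sB b1(1) b2(1)] .
  moreover have "(x - b2) - (x - b1) \<in> K" using subspace_diff[OF sK b2(2) b1(2)] .
  moreover have "(x - b2) - (x - b1) = b1 - b2" by simp
  ultimately have "b1 - b2 \<in> K \<inter> B" by simp
  thus ?thesis using I by simp
qed

lemma proj_props:
  assumes m: "module scale" and sK: "module.subspace scale K" and sB: "module.subspace scale B"
    and I: "K \<inter> B = {0}" and D: "\<forall>x. \<exists>a\<in>K. \<exists>b\<in>B. x = a + b"
  shows "proj_along K B x \<in> B \<and> x - proj_along K B x \<in> K"
proof -
  obtain a b where ab: "a \<in> K" "b \<in> B" "x = a + b" using D by blast
  have ex: "b \<in> B \<and> x - b \<in> K" using ab by simp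
  have "proj_along K B x = b" unfolding proj_along_def
  proof (rule the_equality)
    show "b \<in> B \<and> x - b \<in> K" by (rule ex)
    fix y assume "y \<in> B \<and> x - y \<in> K" thus "y = b" using proj_unique[OF m sK sB I] ex by blast
  qed
  thus ?thesis using ex by simp
qed

lemma proj_eq:
  assumes m: "module scale" and sK: "module.subspace scale K" and sB: "module.subspace scale B"
    and I: "K \<inter> B = {0}" and D: "\<forall>x. \<exists>a\<in>K. \<exists>b\<in>B. x = a + b"
    and b: "b \<in> B" "x - b \<in> K"
  shows "proj_along K B x = b"
  using proj_props[OF m sK sB I D, of x] proj_unique[OF m sK sB I b] by blast

lemma proj_good:
  assumes m: "module scale" and P: "(K, B) \<in> comm_split_pairs scale mult"
  shows "proj_along K B \<in> idem_anti_pre_endos scale mult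
          \<and> (ker (proj_along K B), range (proj_along K B)) = (K, B)"
proof -
  interpret module scale by fact
  from P have sK: "subspace K" and sB: "subspace B" and I: "K \<inter> B = {0}"
    and D: "\<forall>x. \<exists>a\<in>K. \<exists>b\<in>B. x = a + b" and C: "\<forall>x y. mult x y - mult y x \<in> K"
    and Bc: "\<forall>b\<in>B. \<forall>b'\<in>B. mult b b' = mult b' b"
    unfolding comm_split_pairs_def by auto
  let ?p = "proj_along K B"
  note pp = proj_props[OF m sK sB I D]
  note pe = proj_eq[OF m sK sB I D]
  have hom: "module_hom scale scale ?p"
  proof (rule module_hom.intro[OF m m], rule module_hom_axioms.intro)
    fix x y
    show "?p (x + y) = ?p x + ?p y"
    proof (rule pe)
      show "?p x + ?p y \<in> B" using pp subspace_add[OF sB] by blast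
      have "(x - ?p x) + (y - ?p y) \<in> K" using pp subspace_add[OF sK] by blast
      moreover have "(x - ?p x) + (y - ?p y) = x + y - (?p x + ?p y)" by simp
      ultimately show "x + y - (?p x + ?p y) \<in> K" by simp
    qed
  next
    fix r x
    show "?p (scale r x) = scale r (?p x)"
    proof (rule pe)
      show "scale r (?p x) \<in> B" using pp subspace_scale[OF sB] by blast
      have "scale r (x - ?p x) \<in> K" using pp subspace_scale[OF sK] by blast
      thus "scale r x - scale r (?p x) \<in> K" by (simp add: scale_right_diff_distrib)
    qed
  qed
  have fixB: "?p b = b" if "b \<in> B" for b
    using pe[OF that] subspace_0[OF sK] by simp
  have idem: "?p \<circ> ?p = ?p" using fixB pp by auto
  have kerK: "ker ?p = K"
  proof
    show "ker ?p \<subseteq> K"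
    proof
      fix x assume "x \<in> ker ?p" hence "?p x = 0" by (simp add: ker_def)
      with pp[of x] show "x \<in> K" by simp
    qed
    show "K \<subseteq> ker ?p" unfolding ker_def
      using pe[OF subspace_0[OF sB]] by auto
  qed
  have rng: "range ?p = B"
  proof
    show "range ?p \<subseteq> B" using pp by auto
    show "B \<subseteq> range ?p" using fixB by (metis image_eqI subsetI UNIV_I)
  qed
  have anti: "anti_pre_morphism mult ?p" unfolding anti_pre_morphism_def
  proof (intro allI)
    fix x y
    have "?p (mult x y - mult y x) = 0" using C kerK unfolding ker_def by blast
    hence "?p (mult x y) = ?p (mult y x)" using module_hom.diff[OF hom] by simp
    moreover have "mult (?p x) (?p y) = mult (?p y) (?p x)" using Bc pp by blast
    ultimately show "?p (mult x y) + mult (?p x) (?p y) = ?p (mult y x) + mult (?p y) (?p x)"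
      by simp
  qed
  show ?thesis using hom idem anti kerK rng unfolding idem_anti_pre_endos_def by simp
qed

lemma endo_good:
  assumes m: "module scale" and tt: "two_torsion_free TYPE('m::ab_group_add)"
    and E: "(e :: 'm \<Rightarrow> 'm) \<in> idem_anti_pre_endos scale mult"
  shows "(ker e, range e) \<in> comm_split_pairs scale mult \<and> e = proj_along (ker e) (range e)"
proof -
  interpret module scale by fact
  from E have hom: "module_hom scale scale e" and idem: "\<And>x. e (e x) = e x"
    and anti: "\<And>x y. e (mult x y) + mult (e x) (e y) = e (mult y x) + mult (e y) (e x)"
    unfolding idem_anti_pre_endos_def anti_pre_morphism_def by (auto simp: fun_eq_iff)
  note ediff = module_hom.diff[OF hom] and eneg = module_hom.neg[OF hom]
    and ezero = module_hom.zero[OF hom]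
  have sK: "subspace (ker e)" unfolding ker_def by (rule module_hom.subspace_kernel[OF hom])
  have sB: "subspace (range e)" by (rule module_hom.subspace_image[OF hom subspace_UNIV])
  have I: "ker e \<inter> range e = {0}" unfolding ker_def using idem ezero by auto
  have D: "\<forall>x. \<exists>a\<in>ker e. \<exists>b\<in>range e. x = a + b"
  proof
    fix x
    have "x - e x \<in> ker e" unfolding ker_def using ediff idem by simp
    thus "\<exists>a\<in>ker e. \<exists>b\<in>range e. x = a + b" by (metis diff_add_cancel rangeI)
  qed
  have Bc: "\<forall>b\<in>range e. \<forall>b'\<in>range e. mult b b' = mult b' b"
  proof (intro ballI)
    fix b b' assume "b \<in> range e" "b' \<in> range e"
    then have eb: "e b = b" "e b' = b'" using idem by auto
    define z where "z = mult b b' - mult b' b"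
    have h: "e (mult b b') + mult b b' = e (mult b' b) + mult b' b" using anti[of b b'] eb by simp
    have h2: "e (mult b b') - e (mult b' b) = mult b' b - mult b b'"
      using h by (simp add: algebra_simps)
    have ez: "e z = - z" unfolding z_def using h2 ediff by simp
    have "e z = - e z" using idem[of z] ez eneg by metis
    hence "e z + e z = 0" by (metis add.right_inverse)
    hence "e z = 0" using tt unfolding two_torsion_free_def by blast
    hence "z = 0" using ez by simp
    thus "mult b b' = mult b' b" unfolding z_def by simp
  qed
  have C: "\<forall>x y. mult x y - mult y x \<in> ker e"
  proof (intro allI)
    fix x y
    have "mult (e x) (e y) = mult (e y) (e x)" using Bc by blast
    hence "e (mult x y) = e (mult y x)" using anti[of x y] by simp
    thus "mult x y - mult y x \<in> ker e" unfolding ker_def using ediff by simp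
  qed
  have P: "(ker e, range e) \<in> comm_split_pairs scale mult"
    unfolding comm_split_pairs_def using sK sB I D C Bc by blast
  have EQ: "e x = proj_along (ker e) (range e) x" for x
  proof -
    have "x - e x \<in> ker e" unfolding ker_def using ediff idem by simp
    thus ?thesis using proj_eq[OF m sK sB I D, of "e x" x] by auto
  qed
  have "e = proj_along (ker e) (range e)" by (rule ext) (rule EQ)
  with P show ?thesis by (rule conjI)
qed

theorem theorem5p3:
  fixes scale :: "'k::comm_ring_1 \<Rightarrow> 'm::ab_group_add \<Rightarrow> 'm"
    and mult :: "'m \<Rightarrow> 'm \<Rightarrow> 'm"
  assumes "k_algebra scale mult"
    and "two_torsion_free TYPE('m)"
  shows "bij_betw (\<lambda>e. (ker e, range e))
           (idem_anti_pre_endos scale mult) (comm_split_pairs scale mult)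
       \<and> (\<forall>(K, B) \<in> comm_split_pairs scale mult.
            proj_along K B \<in> idem_anti_pre_endos scale mult
          \<and> (ker (proj_along K B), range (proj_along K B)) = (K, B))"
proof -
  have m: "module scale" using assms(1) unfolding k_algebra_def by simp
  note EG = endo_good[OF m assms(2)]
  note PG = proj_good[OF m]
  have bij: "bij_betw (\<lambda>e. (ker e, range e))
           (idem_anti_pre_endos scale mult) (comm_split_pairs scale mult)"
  proof (rule bij_betwI')
    fix x y assume "x \<in> idem_anti_pre_endos scale mult" "y \<in> idem_anti_pre_endos scale mult"
    thus "((ker x, range x) = (ker y, range y)) = (x = y)" using EG by (metis prod.inject)
  next
    fix x assume "x \<in> idem_anti_pre_endos scale mult"
    thus "(ker x, range x) \<in> comm_split_pairs scale mult" using EG by blast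
  next
    fix y assume "y \<in> comm_split_pairs scale mult"
    thus "\<exists>x\<in>idem_anti_pre_endos scale mult. y = (ker x, range x)"
      using PG by (metis surj_pair)
  qed
  have "\<forall>(K, B) \<in> comm_split_pairs scale mult.
            proj_along K B \<in> idem_anti_pre_endos scale mult
          \<and> (ker (proj_along K B), range (proj_along K B)) = (K, B)"
    using PG[of _ _ mult] by blast
  thus ?thesis using bij by blast
qed

end
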